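(* Let $X$ be a complete metric space, let $f:X\to\mathbb{R}$ be a continuous function, let $r_0>0$, $k>0$, assume $f$ is strongly slope-regular on $[0<f<r_0]$, and let $\varphi\in\mathcal{K}(0,r_0)$. The following assertions are equivalent: (i) the multivalued mapping $x\mapsto[(\varphi\circ f)(x),+\infty)$ is $k$-metrically regular on $[0<f<r_0]\times(0,\varphi(r_0))$; (ii) for all $r_1,r_2\in(0,r_0)$, $\operatorname{Dist}([f=r_1],[f=r_2])\le k\,|\varphi(r_1)-\varphi(r_2)|$; (iii) for all $x\in[0<f<r_0]$, $|\nabla(\varphi\circ f)|(x)\ge\frac1k$.
   Context: $f$ is strongly slope-regular on a set $S$ if $|\nabla f|(x)=|\nabla(-f)|(x)$ for every $x\in S$, where the strong slope is $|\nabla g|(x)=\limsup_{y\to x}\frac{(g(x)-g(y))^+}{d(x,y)}$, $a^+=\max\{a,0\}$. $\mathcal{K}(0,r_0)$ is the set of $\varphi\in C([0,r_0))\cap C^1(0,r_0)$ with $\varphi(0)=0$ and $\varphi'>0$ on $(0,r_0)$; $\varphi(r_0):=\lim_{r\uparrow r_0}\varphi(r)$. $[f=r]=\{x:f(x)=r\}$, $[0<f<r_0]=\{x:0<f(x)<r_0\}$. $\operatorname{Dist}(S_1,S_2)=\max\{\sup_{x\in S_1}\operatorname{dist}(x,S_2),\sup_{x\in S_2}\operatorname{dist}(x,S_1)\}$ is the Hausdorff distance. A multivalued map $F:X\rightrightarrows Y$ is $k$-metrically regular at $(\bar x,\bar y)\in\operatorname{Graph}F$ if there exist $\varepsilon,\delta>0$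 with $\operatorname{dist}(x,F^{-1}(y))\le k\operatorname{dist}(y,F(x))$ for all $(x,y)\in B(\bar x,\varepsilon)\times B(\bar y,\delta)$; on $V$ if so at every point of $\operatorname{Graph}F\cap V$. *)

theory Defs
  imports "HOL-Analysis.Analysis"
begin

definition strong_slope :: "('a::metric_space \<Rightarrow> real) \<Rightarrow> 'a \<Rightarrow> ereal" where
  "strong_slope g x =
     (if x islimpt UNIV
      then Limsup (at x) (\<lambda>y. ereal (max (g x - g y) 0 / dist x y))
      else 0)"

definition strongly_slope_regular :: "('a::metric_space \<Rightarrow> real) \<Rightarrow> 'a set \<Rightarrow> bool" where
  "strongly_slope_regular f S \<longleftrightarrow>
     (\<forall>x\<in>S. strong_slope f x = strong_slope (\<lambda>y. - f y) x)"

definition class_K :: "real \<Rightarrow> (real \<Rightarrow> real) set" where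
  "class_K r0 = {\<phi>. continuous_on {0..<r0} \<phi> \<and> \<phi> 0 = 0 \<and>
      (\<exists>\<phi>'. (\<forall>r\<in>{0<..<r0}. (\<phi> has_real_derivative \<phi>' r) (at r))
           \<and> continuous_on {0<..<r0} \<phi>' \<and> (\<forall>r\<in>{0<..<r0}. 0 < \<phi>' r))}"

text \<open>phi(r0) := lim_{r -> r0-} phi(r), in the extended reals (may be +infinity).\<close>
definition K_end :: "(real \<Rightarrow> real) \<Rightarrow> real \<Rightarrow> ereal" where
  "K_end \<phi> r0 = Lim (at_left r0) (\<lambda>r. ereal (\<phi> r))"

text \<open>Distance from a point to a set, extended-real valued (+infinity for the empty set).\<close>
definition edist_set :: "'a::metric_space \<Rightarrow> 'a set \<Rightarrow> ereal" where
  "edist_set x S = (INF s\<in>S. ereal (dist x s))"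

definition hausdorff_edist :: "'a::metric_space set \<Rightarrow> 'a set \<Rightarrow> ereal" where
  "hausdorff_edist S1 S2 =
     max (SUP x\<in>S1. edist_set x S2) (SUP x\<in>S2. edist_set x S1)"

definition metric_regular_at ::
  "real \<Rightarrow> ('a::metric_space \<Rightarrow> 'b::metric_space set) \<Rightarrow> 'a \<Rightarrow> 'b \<Rightarrow> bool" where
  "metric_regular_at k F xb yb \<longleftrightarrow>
     (\<exists>\<epsilon>>0. \<exists>\<delta>>0. \<forall>x\<in>ball xb \<epsilon>. \<forall>y\<in>ball yb \<delta>.
        edist_set x {x'. y \<in> F x'} \<le> ereal k * edist_set y (F x))"

definition metric_regular_on ::
  "real \<Rightarrow> ('a::metric_space \<Rightarrow> 'b::metric_space set) \<Rightarrow> ('a \<times> 'b) set \<Rightarrow> bool" where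
  "metric_regular_on k F V \<longleftrightarrow>
     (\<forall>(x, y)\<in>V. y \<in> F x \<longrightarrow> metric_regular_at k F x y)"

end

theory Submission
  imports Defs
begin


lemma ekeland:
  fixes h :: "'a::complete_space \<Rightarrow> real"
  assumes S: "closed S" and hc: "continuous_on UNIV h" and h0: "\<And>w. w \<in> S \<Longrightarrow> h w \<ge> 0"
    and x0: "x0 \<in> S" and lam: "lam > 0"
  obtains z where "z \<in> S" "h z + lam * dist x0 z \<le> h x0"
    "\<And>w. w \<in> S \<Longrightarrow> w \<noteq> z \<Longrightarrow> h z < h w + lam * dist z w"
proof -
  define T where "T x = {w \<in> S. h w + lam * dist x w \<le> h x}" for x
  have Tself: "x \<in> T x" if "x \<in> S" for x using that by (simp add: T_def)
  have TS: "T x \<subseteq> S" for x by (auto simp: T_def)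
  have Tsub: "T w \<subseteq> T x" if "w \<in> T x" for w x
  proof
    fix v assume v: "v \<in> T w"
    have "dist x v \<le> dist x w + dist w v" by (rule dist_triangle)
    moreover have "lam * dist x v \<le> lam * dist x w + lam * dist w v"
      using calculation lam by (simp add: distrib_left[symmetric])
    ultimately show "v \<in> T x" using v that lam unfolding T_def by auto
  qed
  have Tclosed: "closed (T x)" for x
  proof -
    have "T x = S \<inter> {w. h w + lam * dist x w \<le> h x}" by (auto simp: T_def)
    moreover have "closed {w. h w + lam * dist x w \<le> h x}"
      by (intro closed_Collect_le continuous_intros hc) 
    ultimately show ?thesis using S by auto
  qed
  have ex: "\<exists>y. y \<in> T x \<and> h y < (INF w\<in>T x. h w) + (1/2)^n" if "x \<in> S" for x n
  proof -
    have "T x \<noteq> {}" using Tself[OF that] by auto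
    moreover have "(INF w\<in>T x. h w) < (INF w\<in>T x. h w) + (1/2)^n" by simp
    ultimately obtain v where "v \<in> h ` T x" "v < (INF w\<in>T x. h w) + (1/2)^n"
      using cInf_lessD[of "h ` T x"] by blast
    then show ?thesis by blast
  qed
  define nxt where "nxt n x = (SOME y. y \<in> T x \<and> h y < (INF w\<in>T x. h w) + (1/2)^n)" for n x
  define xs where "xs = rec_nat x0 nxt"
  have xs0: "xs 0 = x0" and xsS: "xs (Suc n) = nxt n (xs n)" for n by (simp_all add: xs_def)
  have xsinS: "xs n \<in> S" for n
  proof (induction n)
    case 0 then show ?case using x0 xs0 by simp
  next
    case (Suc n)
    then show ?case using someI_ex[OF ex[OF Suc, of n]] TS xsS unfolding nxt_def by auto
  qed
  have step: "xs (Suc n) \<in> T (xs n) \<and> h (xs (Suc n)) < (INF w\<in>T (xs n). h w) + (1/2)^n" for n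
    using someI_ex[OF ex[OF xsinS[of n], of n]] xsS unfolding nxt_def by auto
  have dec: "T (xs n) \<subseteq> T (xs m)" if "m \<le> n" for m n
    using that
  proof (induction n)
    case 0 then show ?case by simp
  next
    case (Suc n)
    show ?case
    proof (cases "m = Suc n")
      case False
      then have "m \<le> n" using Suc by simp
      then show ?thesis using Suc Tsub step by blast
    qed simp
  qed
  have bdd: "bdd_below (h ` T x)" for x using h0 TS by (auto intro!: bdd_belowI[of _ 0])
  have small: "lam * dist (xs (Suc n)) w \<le> (1/2)^n" if "w \<in> T (xs (Suc n))" for n w
  proof -
    have w1: "w \<in> T (xs n)" using that dec[of n "Suc n"] by auto
    have "(INF w\<in>T (xs n). h w) \<le> h w" using w1 bdd by (simp add: cINF_lower)
    then show ?thesis using that step[of n] by (auto simp: T_def)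
  qed
  have "\<exists>a. \<Inter>(range (\<lambda>n. T (xs n))) = {a}"
  proof (rule decreasing_closed_nest_sing)
    show "closed (T (xs n))" for n by (rule Tclosed)
    show "T (xs n) \<noteq> {}" for n using Tself[OF xsinS[of n]] by auto
    show "T (xs n) \<subseteq> T (xs m)" if "m \<le> n" for m n using dec that by blast
    fix e :: real assume e: "e > 0"
    obtain n where n: "(1/2::real)^n < e * lam / 2"
      using real_arch_pow_inv[of "e * lam / 2" "1/2"] e lam by auto
    show "\<exists>n. \<forall>x\<in>T (xs n). \<forall>y\<in>T (xs n). dist x y < e"
    proof (intro exI[of _ "Suc n"] ballI)
      fix x y assume xy: "x \<in> T (xs (Suc n))" "y \<in> T (xs (Suc n))"
      have "lam * dist (xs (Suc n)) x \<le> (1/2)^n" "lam * dist (xs (Suc n)) y \<le> (1/2)^n"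
        using small xy by auto
      moreover have "lam * dist x y \<le> lam * dist (xs (Suc n)) x + lam * dist (xs (Suc n)) y"
        using dist_triangle[of x y "xs (Suc n)"] lam
        by (simp add: dist_commute distrib_left[symmetric])
      ultimately have "lam * dist x y < e * lam"
        using n by linarith
      then show "dist x y < e" using lam by simp
    qed
  qed
  then obtain z where z: "\<Inter>(range (\<lambda>n. T (xs n))) = {z}" by blast
  then have zT: "z \<in> T (xs n)" for n by blast
  show ?thesis
  proof
    show "z \<in> S" using zT[of 0] TS by blast
    show "h z + lam * dist x0 z \<le> h x0" using zT[of 0] xs0 by (simp add: T_def)
    fix w assume w: "w \<in> S" "w \<noteq> z"
    show "h z < h w + lam * dist z w"
    proof (rule ccontr)
      assume "\<not> ?thesis"
      then have "w \<in> T z" using w by (simp add: T_def)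
      then have "w \<in> T (xs n)" for n using Tsub[OF zT[of n]] by blast
      then have "w \<in> \<Inter>(range (\<lambda>n. T (xs n)))" by blast
      then show False using z w by blast
    qed
  qed
qed



lemma descent:
  fixes u :: "'a::complete_space \<Rightarrow> real" and \<psi> :: "real \<Rightarrow> real"
  assumes cu: "continuous_on UNIV u" and ab: "a < b"
    and c\<psi>: "continuous_on {a..b} \<psi>" and sm: "strict_mono_on {a..b} \<psi>"
    and sl: "\<And>z. a < u z \<Longrightarrow> u z < b \<Longrightarrow> strong_slope (\<lambda>y. \<psi> (u y)) z \<ge> ereal (1/k)"
    and k: "k > 0" "k < k'"
    and x: "a \<le> u x" "u x < b"
  obtains z where "u z = a" "dist x z \<le> k' * (\<psi> (u x) - \<psi> a)"
proof -
  define cl where "cl t = max a (min b t)" for t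
  define h where "h w = \<psi> (cl (u w)) - \<psi> a" for w
  define S where "S = {w. a \<le> u w \<and> u w \<le> b}"
  have clab: "cl t \<in> {a..b}" for t using ab by (auto simp: cl_def)
  have clid: "cl t = t" if "a \<le> t" "t \<le> b" for t using that by (auto simp: cl_def)
  have hS: "h w = \<psi> (u w) - \<psi> a" if "w \<in> S" for w using that clid by (simp add: h_def S_def)
  have "continuous_on UNIV (\<lambda>w. cl (u w))" unfolding cl_def
    by (intro continuous_intros cu)
  then have "continuous_on UNIV (\<lambda>w. \<psi> (cl (u w)))"
    by (rule continuous_on_compose2[OF c\<psi>]) (use clab in auto)
  then have hc: "continuous_on UNIV h" unfolding h_def by (intro continuous_intros)
  have Scl: "closed S" unfolding S_def
    by (intro closed_Collect_conj closed_Collect_le continuous_intros cu)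
  have mono_le: "\<psi> s \<le> \<psi> t \<longleftrightarrow> s \<le> t" if "s \<in> {a..b}" "t \<in> {a..b}" for s t
    using sm that by (smt (verit) strict_mono_onD)
  have h0: "h w \<ge> 0" if "w \<in> S" for w using hS[OF that] that mono_le[of a "u w"] ab
    by (auto simp: S_def)
  have xS: "x \<in> S" using x by (simp add: S_def)
  have lam: "1/k' > 0" using k by simp
  obtain z where zS: "z \<in> S" and zd: "h z + (1/k') * dist x z \<le> h x"
    and zmin: "\<And>w. w \<in> S \<Longrightarrow> w \<noteq> z \<Longrightarrow> h z < h w + (1/k') * dist z w"
    using ekeland[OF Scl hc h0 xS lam] by blast
  have dz: "dist x z \<le> k' * (\<psi> (u x) - \<psi> a)"
  proof -
    have "(1/k') * dist x z \<le> h x" using zd h0[OF zS] by linarith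
    then have "dist x z \<le> k' * h x" using k by (simp add: field_simps)
    then show ?thesis using hS[OF xS] by simp
  qed
  have "u z = a"
  proof (rule ccontr)
    assume ne: "u z \<noteq> a"
    have "h z \<le> h x" using zd by (smt (verit) lam zero_le_dist mult_nonneg_nonneg)
    then have "\<psi> (u z) \<le> \<psi> (u x)" using hS[OF zS] hS[OF xS] by simp
    then have "u z \<le> u x" using mono_le[of "u z" "u x"] zS x by (auto simp: S_def)
    then have zin: "a < u z" "u z < b" using ne zS x by (auto simp: S_def)
    have ev: "eventually (\<lambda>y. u y \<in> {a<..<b}) (at z)"
    proof -
      have "isCont u z" using cu by (simp add: continuous_on_eq_continuous_at)
      then have "(u \<longlongrightarrow> u z) (at z)" by (simp add: isCont_def)
      then have "eventually (\<lambda>y. u y \<in> {a<..<b}) (at z)"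
        using zin by (intro topological_tendstoD) auto
      then show ?thesis .
    qed
    have ev2: "eventually (\<lambda>y. ereal (max (\<psi> (u z) - \<psi> (u y)) 0 / dist z y) \<le> ereal (1/k')) (at z)"
      using ev eventually_at_topological
    proof -
      have "eventually (\<lambda>y. y \<noteq> z \<and> u y \<in> {a<..<b}) (at z)"
        using ev by (simp add: eventually_at_filter eventually_mono)
      then show ?thesis
      proof (rule eventually_mono)
        fix y assume y: "y \<noteq> z \<and> u y \<in> {a<..<b}"
        then have yS: "y \<in> S" by (auto simp: S_def)
        have yz: "y \<noteq> z" using y by blast
        have "h z < h y + (1/k') * dist z y" using zmin[OF yS yz] .
        then have "\<psi> (u z) - \<psi> (u y) < (1/k') * dist z y" using hS[OF yS] hS[OF zS] by simp
        moreover have "dist z y > 0" using yz by (simp add: dist_commute)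
        ultimately have "max (\<psi> (u z) - \<psi> (u y)) 0 \<le> (1/k') * dist z y"
          using lam by (auto simp: max_def)
        then have "max (\<psi> (u z) - \<psi> (u y)) 0 / dist z y \<le> 1/k'"
          using \<open>dist z y > 0\<close> by (simp add: divide_le_eq)
        then show "ereal (max (\<psi> (u z) - \<psi> (u y)) 0 / dist z y) \<le> ereal (1/k')" by simp
      qed
    qed
    have "strong_slope (\<lambda>y. \<psi> (u y)) z \<le> ereal (1/k')"
      unfolding strong_slope_def using Limsup_bounded[OF ev2] lam by auto
    moreover have "1/k' < 1/k" using k by (simp add: frac_less2)
    ultimately show False using sl[OF zin] by (smt (verit) ereal_less_eq(3) order_trans)
  qed
  then show ?thesis using that dz by blast
qed



lemma slope_ge_from_points:
  fixes g :: "'a::metric_space \<Rightarrow> real"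
  assumes k: "k > 0"
    and pts: "\<And>\<delta> \<eta>. \<delta> > 0 \<Longrightarrow> \<eta> > 0 \<Longrightarrow>
       \<exists>y D. D > 0 \<and> g x - g y \<ge> D \<and> dist x y < k*D*(1+\<eta>) \<and> dist x y < \<delta>"
  shows "strong_slope g x \<ge> ereal (1/k)"
proof -
  have lim: "x islimpt UNIV"
    unfolding islimpt_approachable
  proof (intro allI impI)
    fix e :: real assume "e > 0"
    then obtain y D where "D > 0" "g x - g y \<ge> D" "dist x y < e" using pts[of e 1] by auto
    then have "y \<noteq> x" "dist y x < e" by (auto simp: dist_commute)
    then show "\<exists>x'\<in>UNIV. x' \<noteq> x \<and> dist x' x < e" by blast
  qed
  have "ereal (1/k) \<le> Limsup (at x) (\<lambda>y. ereal (max (g x - g y) 0 / dist x y))"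
  proof (rule ccontr)
    assume "\<not> ?thesis"
    then have "Limsup (at x) (\<lambda>y. ereal (max (g x - g y) 0 / dist x y)) < ereal (1/k)" by simp
    then obtain c where c1: "Limsup (at x) (\<lambda>y. ereal (max (g x - g y) 0 / dist x y)) < ereal c"
      and c2: "ereal c < ereal (1/k)" using ereal_dense2 by blast
    have "eventually (\<lambda>y. ereal (max (g x - g y) 0 / dist x y) < ereal c) (at x)"
      using Limsup_lessD[OF c1] .
    then obtain d where d: "d > 0" and dd: "\<And>y. y \<noteq> x \<Longrightarrow> dist y x < d \<Longrightarrow> max (g x - g y) 0 / dist x y < c"
      unfolding eventually_at by auto
    define \<eta> where "\<eta> = (if c \<le> 0 then 1 else 1/(k*c) - 1)"
    have c1k: "c < 1/k" using c2 by simp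
    have eta: "\<eta> > 0" using c1k k by (auto simp: \<eta>_def field_simps)
    obtain y D where D: "D > 0" "g x - g y \<ge> D" "dist x y < k*D*(1+\<eta>)" "dist x y < d"
      using pts[OF d eta] by blast
    have yx: "y \<noteq> x" using D by auto
    have dpos: "dist x y > 0" using yx by simp
    have lt: "max (g x - g y) 0 / dist x y < c" using dd[OF yx] D by (simp add: dist_commute)
    have "D / dist x y \<le> max (g x - g y) 0 / dist x y"
      using D dpos by (intro divide_right_mono) auto
    moreover have "c \<le> D / dist x y"
    proof (cases "c \<le> 0")
      case True
      have "0 \<le> D / dist x y" using D dpos by simp
      then show ?thesis using True by linarith
    next
      case False
      then have "k*D*(1+\<eta>) = D / c" using k by (simp add: \<eta>_def field_simps)
      then have "dist x y < D / c" using D by simp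
      then have "c * dist x y < D" using False by (simp add: field_simps)
      then show ?thesis using dpos by (simp add: field_simps)
    qed
    ultimately show False using lt by linarith
  qed
  then show ?thesis using lim by (simp add: strong_slope_def)
qed

lemma slope_chain_bounds:
  fixes f :: "'a::metric_space \<Rightarrow> real"
  assumes fc: "isCont f x" and der: "(\<psi> has_real_derivative d) (at (f x))"
    and c: "0 < c1" "c1 < d" "d < c2"
  shows "ereal c1 * strong_slope f x \<le> strong_slope (\<lambda>y. \<psi> (f y)) x \<and>
         strong_slope (\<lambda>y. \<psi> (f y)) x \<le> ereal c2 * strong_slope f x"
proof (cases "x islimpt UNIV")
  case False then show ?thesis by (simp add: strong_slope_def)
next
  case True
  then have nb: "at x \<noteq> bot" by (simp add: trivial_limit_within)
  define e where "e = min (d - c1) (c2 - d)"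
  have e: "e > 0" using c by (simp add: e_def)
  have "(\<psi> has_derivative (\<lambda>h. d * h)) (at (f x))"
    using der by (simp add: has_field_derivative_def)
  then obtain \<delta> where \<delta>: "\<delta> > 0"
    and dd: "\<And>t. norm (t - f x) < \<delta> \<Longrightarrow> norm (\<psi> t - \<psi> (f x) - d * (t - f x)) \<le> e * norm (t - f x)"
    using e unfolding has_derivative_at_alt by blast
  have "eventually (\<lambda>y. dist (f y) (f x) < \<delta>) (at x)"
    using fc \<delta> unfolding isCont_def by (rule tendstoD)
  then have ev: "eventually (\<lambda>y. y \<noteq> x \<and> \<bar>f y - f x\<bar> < \<delta>) (at x)"
    by (auto simp: eventually_at_filter dist_real_def elim: eventually_mono)
  have pw: "c1 * max (f x - f y) 0 \<le> max (\<psi> (f x) - \<psi> (f y)) 0 \<and>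
            max (\<psi> (f x) - \<psi> (f y)) 0 \<le> c2 * max (f x - f y) 0"
    if "\<bar>f y - f x\<bar> < \<delta>" for y
  proof -
    have "\<bar>\<psi> (f y) - \<psi> (f x) - d * (f y - f x)\<bar> \<le> e * \<bar>f y - f x\<bar>" using dd[of "f y"] that by simp
    then have b: "\<bar>(\<psi> (f x) - \<psi> (f y)) - d * (f x - f y)\<bar> \<le> e * \<bar>f x - f y\<bar>"
      by (simp add: abs_minus_commute algebra_simps)
    have e1: "e \<le> d - c1" and e2: "e \<le> c2 - d" by (auto simp: e_def)
    show ?thesis
    proof (cases "f y \<le> f x")
      case True
      define D where "D = f x - f y"
      have D0: "D \<ge> 0" using True by (simp add: D_def)
      have b': "\<bar>(\<psi> (f x) - \<psi> (f y)) - d * D\<bar> \<le> e * D" using b D0 by (simp add: D_def)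
      have m1: "c1 * D \<le> (d - e) * D" using e1 D0 by (intro mult_right_mono) auto
      have m2: "(d + e) * D \<le> c2 * D" using e2 D0 by (intro mult_right_mono) auto
      have m0: "0 \<le> c1 * D" using c D0 by simp
      have "c1 * D \<le> \<psi> (f x) - \<psi> (f y)" "\<psi> (f x) - \<psi> (f y) \<le> c2 * D"
        using b' m1 m2 by (auto simp: algebra_simps abs_le_iff)
      then show ?thesis using m0 D0 by (simp add: D_def[symmetric] max_def)
    next
      case False
      define D where "D = f y - f x"
      have D0: "D > 0" using False by (simp add: D_def)
      have "d * (f x - f y) = - (d * D)" by (simp add: D_def algebra_simps)
      then have b': "\<bar>(\<psi> (f x) - \<psi> (f y)) + d * D\<bar> \<le> e * D" using b D0 by (simp add: D_def)
      have "(d - e) * D \<ge> 0" using e1 c D0 by simp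
      then have "\<psi> (f x) - \<psi> (f y) \<le> 0" using b' by (auto simp: algebra_simps abs_le_iff)
      then show ?thesis using False by (simp add: max_def)
    qed
  qed
  define R where "R y = max (f x - f y) 0 / dist x y" for y
  define Q where "Q y = max (\<psi> (f x) - \<psi> (f y)) 0 / dist x y" for y
  have ev2: "eventually (\<lambda>y. ereal c1 * ereal (R y) \<le> ereal (Q y) \<and> ereal (Q y) \<le> ereal c2 * ereal (R y)) (at x)"
    using ev
  proof (rule eventually_mono)
    fix y assume y: "y \<noteq> x \<and> \<bar>f y - f x\<bar> < \<delta>"
    have dp: "dist x y > 0" using y by (metis zero_less_dist_iff)
    have p: "c1 * max (f x - f y) 0 \<le> max (\<psi> (f x) - \<psi> (f y)) 0"
      "max (\<psi> (f x) - \<psi> (f y)) 0 \<le> c2 * max (f x - f y) 0" using pw[of y] y by auto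
    have "c1 * R y = (c1 * max (f x - f y) 0) / dist x y" "c2 * R y = (c2 * max (f x - f y) 0) / dist x y"
      by (simp_all add: R_def)
    then have "c1 * R y \<le> Q y" "Q y \<le> c2 * R y"
      using divide_right_mono[OF p(1), of "dist x y"] divide_right_mono[OF p(2), of "dist x y"] dp
      by (simp_all add: Q_def)
    then show "ereal c1 * ereal (R y) \<le> ereal (Q y) \<and> ereal (Q y) \<le> ereal c2 * ereal (R y)" by simp
  qed
  have "Limsup (at x) (\<lambda>y. ereal c1 * ereal (R y)) \<le> Limsup (at x) (\<lambda>y. ereal (Q y))"
    by (rule Limsup_mono) (use ev2 in \<open>auto elim: eventually_mono\<close>)
  moreover have "Limsup (at x) (\<lambda>y. ereal (Q y)) \<le> Limsup (at x) (\<lambda>y. ereal c2 * ereal (R y))"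
    by (rule Limsup_mono) (use ev2 in \<open>auto elim: eventually_mono\<close>)
  moreover have "Limsup (at x) (\<lambda>y. ereal c1 * ereal (R y)) = ereal c1 * Limsup (at x) (\<lambda>y. ereal (R y))"
    using nb c by (intro Limsup_ereal_mult_left) auto
  moreover have "Limsup (at x) (\<lambda>y. ereal c2 * ereal (R y)) = ereal c2 * Limsup (at x) (\<lambda>y. ereal (R y))"
    using nb c by (intro Limsup_ereal_mult_left) auto
  ultimately show ?thesis using True by (simp add: strong_slope_def R_def Q_def)
qed



lemma strong_slope_nonneg: "strong_slope g x \<ge> 0"
proof (cases "x islimpt UNIV")
  case True
  then have nb: "at x \<noteq> bot" by (simp add: trivial_limit_within)
  have "0 \<le> Limsup (at x) (\<lambda>y. ereal (max (g x - g y) 0 / dist x y))"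
    by (rule le_Limsup[OF nb]) (auto intro!: always_eventually)
  then show ?thesis using True by (simp add: strong_slope_def)
qed (simp add: strong_slope_def)

lemma real_sandwich:
  fixes a b d :: real
  assumes a: "a \<ge> 0" and d: "d > 0"
    and l: "\<And>c. 0 < c \<Longrightarrow> c < d \<Longrightarrow> c * a \<le> b"
    and u: "\<And>c. d < c \<Longrightarrow> b \<le> c * a"
  shows "b = d * a"
proof (rule antisym)
  show "b \<le> d * a"
  proof (rule ccontr)
    assume "\<not> ?thesis"
    then have bg: "b > d * a" by simp
    show False
    proof (cases "a = 0")
      case True then show False using u[of "d+1"] bg by simp
    next
      case False
      then have ap: "a > 0" using a by simp
      define c where "c = (d + b / a) / 2"
      have "d * a < b" using bg .
      then have "d < b / a" using ap by (simp add: field_simps)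
      then have cd: "d < c" by (simp add: c_def)
      have "c * a = (d * a + b) / 2" using ap by (simp add: c_def field_simps)
      then show False using u[OF cd] bg by simp
    qed
  qed
  show "d * a \<le> b"
  proof (rule ccontr)
    assume "\<not> ?thesis"
    then have bl: "b < d * a" by simp
    show False
    proof (cases "a = 0")
      case True then show False using l[of "d/2"] bl d by simp
    next
      case False
      then have ap: "a > 0" using a by simp
      define c where "c = max (d/2) ((d + b / a) / 2)"
      have "b / a < d" using bl ap by (simp add: field_simps)
      then have c1: "c < d" "0 < c" using d by (auto simp: c_def)
      have "(d + b / a) / 2 * a = (d * a + b) / 2" using ap by (simp add: field_simps)
      moreover have "(d + b / a) / 2 * a \<le> c * a" using ap by (intro mult_right_mono) (auto simp: c_def)
      ultimately show False using l[OF c1(2) c1(1)] bl by simp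
    qed
  qed
qed

lemma slope_chain:
  fixes f :: "'a::metric_space \<Rightarrow> real"
  assumes fc: "isCont f x" and der: "(\<psi> has_real_derivative d) (at (f x))" and d: "d > 0"
  shows "strong_slope (\<lambda>y. \<psi> (f y)) x = ereal d * strong_slope f x"
proof -
  define A where "A = strong_slope f x"
  define B where "B = strong_slope (\<lambda>y. \<psi> (f y)) x"
  have A0: "A \<ge> 0" unfolding A_def by (rule strong_slope_nonneg)
  have l: "ereal c * A \<le> B" if "0 < c" "c < d" for c
    using slope_chain_bounds[OF fc der that, of "d+1"] by (simp add: A_def B_def)
  have u: "B \<le> ereal c * A" if "d < c" for c
    using slope_chain_bounds[OF fc der _ _ that, of "d/2"] d by (simp add: A_def B_def)
  show ?thesis
  proof (cases A)
    case (real a)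
    then have a0: "a \<ge> 0" using A0 by simp
    have "B \<le> ereal ((d+1) * a)" using u[of "d+1"] real by simp
    moreover have "ereal ((d/2) * a) \<le> B" using l[of "d/2"] real d by simp
    ultimately obtain b where b: "B = ereal b" by (cases B) auto
    have "b = d * a"
      by (rule real_sandwich[OF a0 d]) (use l u real b in auto)
    then show ?thesis using real b by (simp add: A_def B_def)
  next
    case PInf
    have "ereal (d/2) * A \<le> B" using l[of "d/2"] d by simp
    then have "B = \<infinity>" using PInf d by simp
    then show ?thesis using PInf d by (simp add: A_def B_def)
  next
    case MInf then show ?thesis using A0 by simp
  qed
qed



lemma classK_unpack:
  assumes "\<phi> \<in> class_K r0"
  obtains \<phi>' where "continuous_on {0..<r0} \<phi>" "\<phi> 0 = 0"
    "\<And>r. 0 < r \<Longrightarrow> r < r0 \<Longrightarrow> (\<phi> has_real_derivative \<phi>' r) (at r)"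
    "\<And>r. 0 < r \<Longrightarrow> r < r0 \<Longrightarrow> 0 < \<phi>' r"
proof -
  from assms obtain \<phi>' where "continuous_on {0..<r0} \<phi>" "\<phi> 0 = 0"
    "\<forall>r\<in>{0<..<r0}. (\<phi> has_real_derivative \<phi>' r) (at r)"
    "\<forall>r\<in>{0<..<r0}. 0 < \<phi>' r"
    unfolding class_K_def by blast
  then show ?thesis by (intro that[of \<phi>']) auto
qed

lemma classK_strict:
  assumes "\<phi> \<in> class_K r0" "0 \<le> s" "s < t" "t < r0"
  shows "\<phi> s < \<phi> t"
proof -
  obtain \<phi>' where c: "continuous_on {0..<r0} \<phi>"
    and der: "\<And>r. 0 < r \<Longrightarrow> r < r0 \<Longrightarrow> (\<phi> has_real_derivative \<phi>' r) (at r)"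
    and pos: "\<And>r. 0 < r \<Longrightarrow> r < r0 \<Longrightarrow> 0 < \<phi>' r"
    using classK_unpack[OF assms(1)] by metis
  show ?thesis
  proof (rule DERIV_pos_imp_increasing_open[OF assms(3)])
    fix x assume x: "s < x" "x < t"
    then have "0 < x" "x < r0" using assms by linarith+
    then show "\<exists>y. (\<phi> has_real_derivative y) (at x) \<and> 0 < y"
      using der pos by blast
  next
    have "{s..t} \<subseteq> {0..<r0}" using assms by auto
    then show "continuous_on {s..t} \<phi>" using c by (rule continuous_on_subset[rotated])
  qed
qed

lemma classK_strict_mono_on:
  assumes "\<phi> \<in> class_K r0" "0 \<le> a" "b < r0"
  shows "strict_mono_on {a..b} \<phi>"
proof (rule strict_mono_onI)
  fix s t assume "s \<in> {a..b}" "t \<in> {a..b}" "s < t"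
  then show "\<phi> s < \<phi> t" using classK_strict[OF assms(1), of s t] assms by simp
qed

lemma classK_cont:
  assumes "\<phi> \<in> class_K r0" "0 \<le> a" "b < r0"
  shows "continuous_on {a..b} \<phi>"
proof -
  have "{a..b} \<subseteq> {0..<r0}" using assms by auto
  moreover have "continuous_on {0..<r0} \<phi>" using classK_unpack[OF assms(1)] by metis
  ultimately show ?thesis by (rule continuous_on_subset[rotated])
qed

lemma classK_zero: "\<phi> \<in> class_K r0 \<Longrightarrow> \<phi> 0 = 0"
  unfolding class_K_def by blast

lemma K_end_eq:
  assumes "\<phi> \<in> class_K r0" "r0 > 0"
  shows "K_end \<phi> r0 = (SUP r\<in>{0<..<r0}. ereal (\<phi> r))"
proof -
  define M where "M = (SUP r\<in>{0<..<r0}. ereal (\<phi> r))"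
  have "((\<lambda>r. ereal (\<phi> r)) \<longlongrightarrow> M) (at_left r0)"
  proof (rule order_tendstoI)
    fix a assume "a < M"
    then obtain r where r: "r \<in> {0<..<r0}" "a < ereal (\<phi> r)" unfolding M_def by (auto simp: less_SUP_iff)
    have "eventually (\<lambda>t. t \<in> {r<..<r0}) (at_left r0)" using r by (intro eventually_at_left_real) auto
    then show "eventually (\<lambda>t. a < ereal (\<phi> t)) (at_left r0)"
    proof (rule eventually_mono)
      fix t assume "t \<in> {r<..<r0}"
      then have "\<phi> r < \<phi> t" using classK_strict[OF assms(1), of r t] r by auto
      then show "a < ereal (\<phi> t)" using r(2) by (meson ereal_less_eq(3) less_imp_le order_less_le_trans)
    qed
  next
    fix a assume "M < a"
    have "eventually (\<lambda>t. t \<in> {0<..<r0}) (at_left r0)" using assms by (intro eventually_at_left_real) auto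
    then show "eventually (\<lambda>t. ereal (\<phi> t) < a) (at_left r0)"
    proof (rule eventually_mono)
      fix t assume "t \<in> {0<..<r0}"
      then have "ereal (\<phi> t) \<le> M" unfolding M_def by (rule SUP_upper)
      then show "ereal (\<phi> t) < a" using \<open>M < a\<close> by simp
    qed
  qed
  then have "Lim (at_left r0) (\<lambda>r. ereal (\<phi> r)) = M"
    by (intro tendsto_Lim) auto
  then show ?thesis by (simp add: K_end_def M_def)
qed

lemma K_end_gt:
  assumes "\<phi> \<in> class_K r0" "r0 > 0" "0 \<le> r" "r < r0"
  shows "ereal (\<phi> r) < K_end \<phi> r0"
proof -
  have a1: "r < (r + r0)/2" "(r + r0)/2 < r0" using assms(4) by (simp_all add: field_simps)
  have "\<phi> r < \<phi> ((r + r0)/2)" by (rule classK_strict[OF assms(1) assms(3) a1])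
  then have 1: "ereal (\<phi> r) < ereal (\<phi> ((r + r0)/2))" by simp
  have 2: "ereal (\<phi> ((r + r0)/2)) \<le> K_end \<phi> r0"
    unfolding K_end_eq[OF assms(1,2)] using assms a1 by (intro SUP_upper) simp
  show ?thesis by (rule order_less_le_trans[OF 1 2])
qed

lemma K_end_lt:
  assumes "\<phi> \<in> class_K r0" "r0 > 0" "ereal y < K_end \<phi> r0"
  obtains r where "0 < r" "r < r0" "y < \<phi> r"
proof -
  have "ereal y < (SUP r\<in>{0<..<r0}. ereal (\<phi> r))" using assms(3) K_end_eq[OF assms(1,2)] by simp
  then obtain r where "r \<in> {0<..<r0}" "ereal y < ereal (\<phi> r)" unfolding less_SUP_iff by blast
  then show ?thesis using that by auto
qed



lemma edist_le_point: "s \<in> S \<Longrightarrow> edist_set x S \<le> ereal (dist x s)"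
  unfolding edist_set_def by (rule INF_lower)

lemma edist_nonneg: "0 \<le> edist_set x S"
  unfolding edist_set_def by (rule INF_greatest) simp

lemma edist_lt: "edist_set x S < ereal c \<Longrightarrow> \<exists>s\<in>S. dist x s < c"
  unfolding edist_set_def INF_less_iff by simp

lemma edist_from_approx:
  assumes k: "k > 0" and D: "D \<ge> 0"
    and ap: "\<And>k'. k < k' \<Longrightarrow> \<exists>z\<in>S. dist x z \<le> k' * D"
  shows "edist_set x S \<le> ereal (k * D)"
proof (rule ereal_le_epsilon2)
  fix e :: real assume e: "0 < e"
  define k' where "k' = k + e / (D + 1)"
  have "k < k'" using e D by (simp add: k'_def)
  then obtain z where z: "z \<in> S" "dist x z \<le> k' * D" using ap by blast
  have "k' * D = k * D + e * (D / (D + 1))" using D by (simp add: k'_def field_simps)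
  also have "\<dots> \<le> k * D + e * 1" using D e by (intro add_left_mono mult_left_mono) auto
  finally have "dist x z \<le> k * D + e" using z by simp
  then have "edist_set x S \<le> ereal (k * D + e)" using edist_le_point[OF z(1), of x] by (meson ereal_less_eq(3) order_trans)
  then show "edist_set x S \<le> ereal (k * D) + ereal e" by simp
qed

lemma slope_neg_eq:
  fixes f :: "'a::metric_space \<Rightarrow> real"
  assumes fc: "isCont f x" and der: "(\<phi> has_real_derivative d) (at (f x))" and d: "d > 0"
    and reg: "strong_slope f x = strong_slope (\<lambda>y. - f y) x"
  shows "strong_slope (\<lambda>y. - \<phi> (f y)) x = strong_slope (\<lambda>y. \<phi> (f y)) x"
proof -
  have der2: "((\<lambda>t. - \<phi> (- t)) has_real_derivative d) (at (- f x))"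
  proof -
    have "((\<lambda>t. \<phi> (- t)) has_real_derivative d * (-1)) (at (- f x))"
      by (rule DERIV_chain2[of \<phi>]) (use der in \<open>auto intro!: derivative_eq_intros\<close>)
    then show ?thesis using DERIV_minus by fastforce
  qed
  have fc2: "isCont (\<lambda>y. - f y) x" using fc by (intro continuous_intros)
  have "strong_slope (\<lambda>y. - \<phi> (- (- f y))) x = ereal d * strong_slope (\<lambda>y. - f y) x"
    using slope_chain[OF fc2 _ d, of "\<lambda>t. - \<phi> (- t)"] der2 by simp
  moreover have "strong_slope (\<lambda>y. \<phi> (f y)) x = ereal d * strong_slope f x"
    by (rule slope_chain[OF fc der d])
  ultimately show ?thesis using reg by simp
qed



lemma edist_mono: "S \<subseteq> T \<Longrightarrow> edist_set x T \<le> edist_set x S"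
  unfolding edist_set_def by (rule INF_superset_mono) auto

lemma one_sided:
  fixes f :: "'a::complete_space \<Rightarrow> real"
  assumes cu: "continuous_on UNIV f" and r0: "r0 > 0" and k: "k > 0" and K: "\<phi> \<in> class_K r0"
    and s1: "\<And>z. 0 < f z \<Longrightarrow> f z < r0 \<Longrightarrow> strong_slope (\<lambda>y. \<phi> (f y)) z \<ge> ereal (1/k)"
    and s2: "\<And>z. 0 < f z \<Longrightarrow> f z < r0 \<Longrightarrow> strong_slope (\<lambda>y. - \<phi> (f y)) z \<ge> ereal (1/k)"
    and r: "0 < r1" "r1 < r0" "0 < r2" "r2 < r0" and x: "f x = r2"
  shows "edist_set x {x. f x = r1} \<le> ereal (k * \<bar>\<phi> r1 - \<phi> r2\<bar>)"
proof (cases r1 r2 rule: linorder_cases)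
  case equal
  then have "edist_set x {x. f x = r1} \<le> ereal (dist x x)" using x by (intro edist_le_point) simp
  then show ?thesis using equal by simp
next
  case less
  have lt: "\<phi> r1 < \<phi> r2" using classK_strict[OF K, of r1 r2] less r by simp
  show ?thesis
  proof (rule edist_from_approx[OF k])
    show "0 \<le> \<bar>\<phi> r1 - \<phi> r2\<bar>" by simp
    fix k' assume kk: "k < k'"
    define b where "b = (r2 + r0) / 2"
    have b: "r2 < b" "b < r0" using r by (simp_all add: b_def field_simps)
    obtain z where "f z = r1" "dist x z \<le> k' * (\<phi> (f x) - \<phi> r1)"
    proof (rule descent[OF cu, of r1 b \<phi> k k' x])
      show "r1 < b" using b less by simp
      show "continuous_on {r1..b} \<phi>" using classK_cont[OF K, of r1 b] r b by simp
      show "strict_mono_on {r1..b} \<phi>" using classK_strict_mono_on[OF K, of r1 b] r b by simp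
      show "ereal (1/k) \<le> strong_slope (\<lambda>y. \<phi> (f y)) z" if "r1 < f z" "f z < b" for z
        using s1 that r b by simp
    qed (use k kk x less b in auto)
    then show "\<exists>z\<in>{x. f x = r1}. dist x z \<le> k' * \<bar>\<phi> r1 - \<phi> r2\<bar>" using x lt by auto
  qed
next
  case greater
  have lt: "\<phi> r2 < \<phi> r1" using classK_strict[OF K, of r2 r1] greater r by simp
  show ?thesis
  proof (rule edist_from_approx[OF k])
    show "0 \<le> \<bar>\<phi> r1 - \<phi> r2\<bar>" by simp
    fix k' assume kk: "k < k'"
    define \<psi> where "\<psi> t = - \<phi> (- t)" for t
    have cu2: "continuous_on UNIV (\<lambda>y. - f y)" using cu by (intro continuous_intros)
    have c\<psi>: "continuous_on {-r1..-r2/2} \<psi>"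
    proof -
      have "continuous_on {-r1..-r2/2} (\<lambda>t. \<phi> (- t))"
        by (rule continuous_on_compose2[OF classK_cont[OF K, of "r2/2" r1]])
          (use r in \<open>auto intro!: continuous_intros\<close>)
      then show ?thesis unfolding \<psi>_def by (intro continuous_intros)
    qed
    have sm: "strict_mono_on {-r1..-r2/2} \<psi>"
    proof (rule strict_mono_onI)
      fix s t assume st: "s \<in> {-r1..-r2/2}" "t \<in> {-r1..-r2/2}" "s < t"
      then have "\<phi> (- t) < \<phi> (- s)" using classK_strict[OF K, of "-t" "-s"] r by auto
      then show "\<psi> s < \<psi> t" by (simp add: \<psi>_def)
    qed
    obtain z where "- f z = - r1" "dist x z \<le> k' * (\<psi> (- f x) - \<psi> (- r1))"
    proof (rule descent[OF cu2, of "-r1" "-r2/2" \<psi> k k' x])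
      show "- r1 < - r2 / 2" using r greater by simp
      show "ereal (1/k) \<le> strong_slope (\<lambda>y. \<psi> (- f y)) z" if "- r1 < - f z" "- f z < - r2/2" for z
        using s2[of z] that r by (simp add: \<psi>_def)
    qed (use k kk x greater r c\<psi> sm in auto)
    then show "\<exists>z\<in>{x. f x = r1}. dist x z \<le> k' * \<bar>\<phi> r1 - \<phi> r2\<bar>" using x lt by (auto simp: \<psi>_def)
  qed
qed



theorem corollary2p7:
  fixes f :: "'a::complete_space \<Rightarrow> real" and \<phi> :: "real \<Rightarrow> real" and r0 k :: real
  assumes "continuous_on UNIV f" and "r0 > 0" and "k > 0"
    and "strongly_slope_regular f {x. 0 < f x \<and> f x < r0}"
    and "\<phi> \<in> class_K r0"
  shows "(metric_regular_on k
            (\<lambda>x. if 0 \<le> f x \<and> f x < r0 then {y. \<phi> (f x) \<le> y} else {})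
            ({x. 0 < f x \<and> f x < r0} \<times> {y. 0 < y \<and> ereal y < K_end \<phi> r0})
          \<longleftrightarrow>
          (\<forall>r1\<in>{0<..<r0}. \<forall>r2\<in>{0<..<r0}.
             hausdorff_edist {x. f x = r1} {x. f x = r2} \<le> ereal (k * \<bar>\<phi> r1 - \<phi> r2\<bar>)))
       \<and> ((\<forall>r1\<in>{0<..<r0}. \<forall>r2\<in>{0<..<r0}.
             hausdorff_edist {x. f x = r1} {x. f x = r2} \<le> ereal (k * \<bar>\<phi> r1 - \<phi> r2\<bar>))
          \<longleftrightarrow>
          (\<forall>x\<in>{x. 0 < f x \<and> f x < r0}. strong_slope (\<phi> \<circ> f) x \<ge> ereal (1 / k)))"
proof -
  note cu = assms(1) and r0 = assms(2) and k = assms(3) and reg = assms(4) and K = assms(5)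
  define F where "F = (\<lambda>x. if 0 \<le> f x \<and> f x < r0 then {y. \<phi> (f x) \<le> y} else {})"
  define V where "V = {x. 0 < f x \<and> f x < r0} \<times> {y. 0 < y \<and> ereal y < K_end \<phi> r0}"
  define I where "I = metric_regular_on k F V"
  define II where "II = (\<forall>r1\<in>{0<..<r0}. \<forall>r2\<in>{0<..<r0}.
             hausdorff_edist {x. f x = r1} {x. f x = r2} \<le> ereal (k * \<bar>\<phi> r1 - \<phi> r2\<bar>))"
  define III where "III = (\<forall>x\<in>{x. 0 < f x \<and> f x < r0}. strong_slope (\<phi> \<circ> f) x \<ge> ereal (1 / k))"
  have fc: "isCont f x" for x using cu by (simp add: continuous_on_eq_continuous_at)
  have gcomp: "\<phi> \<circ> f = (\<lambda>y. \<phi> (f y))" by (simp add: comp_def)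
  obtain \<phi>' where \<phi>c: "continuous_on {0..<r0} \<phi>" and \<phi>0: "\<phi> 0 = 0"
    and der: "\<And>r. 0 < r \<Longrightarrow> r < r0 \<Longrightarrow> (\<phi> has_real_derivative \<phi>' r) (at r)"
    and dpos: "\<And>r. 0 < r \<Longrightarrow> r < r0 \<Longrightarrow> 0 < \<phi>' r"
    using classK_unpack[OF K] by metis
  have negeq: "strong_slope (\<lambda>y. - \<phi> (f y)) z = strong_slope (\<lambda>y. \<phi> (f y)) z"
    if "0 < f z" "f z < r0" for z
    using slope_neg_eq[OF fc der[OF that] dpos[OF that]] reg that
    unfolding strongly_slope_regular_def by simp

  have III_II: "II" if III: "III"
  proof -
    have s1: "strong_slope (\<lambda>y. \<phi> (f y)) z \<ge> ereal (1/k)" if "0 < f z" "f z < r0" for z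
      using III that gcomp unfolding III_def by auto
    have s2: "strong_slope (\<lambda>y. - \<phi> (f y)) z \<ge> ereal (1/k)" if "0 < f z" "f z < r0" for z
      using s1[OF that] negeq[OF that] by simp
    show ?thesis unfolding II_def hausdorff_edist_def
    proof (intro ballI max.boundedI SUP_least)
      fix r1 r2 x assume r: "r1 \<in> {0<..<r0}" "r2 \<in> {0<..<r0}"
      { assume "x \<in> {x. f x = r1}"
        then show "edist_set x {x. f x = r2} \<le> ereal (k * \<bar>\<phi> r1 - \<phi> r2\<bar>)"
          using one_sided[OF cu r0 k K s1 s2, of r2 r1 x] r by (simp add: abs_minus_commute) }
      { assume "x \<in> {x. f x = r2}"
        then show "edist_set x {x. f x = r1} \<le> ereal (k * \<bar>\<phi> r1 - \<phi> r2\<bar>)"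
          using one_sided[OF cu r0 k K s1 s2, of r1 r2 x] r by simp }
    qed
  qed

  have II_III: "III" if II: "II"
    unfolding III_def
  proof (intro ballI)
    fix x assume xU: "x \<in> {x. 0 < f x \<and> f x < r0}"
    define r where "r = f x"
    have r: "0 < r" "r < r0" using xU by (auto simp: r_def)
    show "strong_slope (\<phi> \<circ> f) x \<ge> ereal (1/k)"
    proof (rule slope_ge_from_points[OF k])
      fix \<delta> \<eta> :: real assume \<delta>: "\<delta> > 0" and \<eta>: "\<eta> > 0"
      have "isCont \<phi> r" using der[OF r] by (rule DERIV_isCont)
      then have "eventually (\<lambda>t. dist (\<phi> t) (\<phi> r) < \<delta> / (k * (1 + \<eta>))) (at r)"
        using \<delta> \<eta> k unfolding isCont_def by (intro tendstoD) auto
      then obtain \<rho> where \<rho>: "\<rho> > 0" and \<rho>': "\<And>t. t \<noteq> r \<Longrightarrow> dist t r < \<rho> \<Longrightarrow> dist (\<phi> t) (\<phi> r) < \<delta> / (k * (1 + \<eta>))"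
        unfolding eventually_at by blast
      define r2 where "r2 = max (r/2) (r - \<rho>/2)"
      have r2: "0 < r2" "r2 < r" "dist r2 r < \<rho>" using r \<rho> by (auto simp: r2_def dist_real_def)
      define D where "D = \<phi> r - \<phi> r2"
      have Dpos: "D > 0" using classK_strict[OF K, of r2 r] r r2 by (simp add: D_def)
      have "\<bar>\<phi> r2 - \<phi> r\<bar> < \<delta> / (k * (1 + \<eta>))" using \<rho>'[of r2] r2 by (simp add: dist_real_def)
      then have "D < \<delta> / (k * (1 + \<eta>))" by (simp add: D_def)
      moreover have kp: "k * (1 + \<eta>) > 0" using k \<eta> by simp
      ultimately have "D * (k * (1 + \<eta>)) < \<delta>" by (simp add: pos_less_divide_eq)
      then have Dd: "k * D * (1 + \<eta>) < \<delta>" by (simp add: algebra_simps)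
      have "hausdorff_edist {x. f x = r2} {x. f x = r} \<le> ereal (k * \<bar>\<phi> r2 - \<phi> r\<bar>)"
        using II r r2 unfolding II_def by auto
      moreover have "edist_set x {x. f x = r2} \<le> hausdorff_edist {x. f x = r2} {x. f x = r}"
        unfolding hausdorff_edist_def by (rule max.coboundedI2, rule SUP_upper) (simp add: r_def)
      ultimately have A: "edist_set x {x. f x = r2} \<le> ereal (k * D)" using Dpos by (simp add: D_def)
      have B: "ereal (k * D) < ereal (k * D * (1 + \<eta>))" using k Dpos \<eta> by simp
      have "edist_set x {x. f x = r2} < ereal (k * D * (1 + \<eta>))"
        by (rule order_le_less_trans[OF A B])
      then obtain y where y: "f y = r2" "dist x y < k * D * (1 + \<eta>)" using edist_lt by blast
      show "\<exists>y D. D > 0 \<and> (\<phi> \<circ> f) x - (\<phi> \<circ> f) y \<ge> D \<and> dist x y < k*D*(1+\<eta>) \<and> dist x y < \<delta>"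
        using y Dpos Dd by (intro exI[of _ y] exI[of _ D]) (auto simp: D_def r_def)
    qed
  qed

  have I_III: "III" if I: "I"
    unfolding III_def
  proof (intro ballI)
    fix x assume xU: "x \<in> {x. 0 < f x \<and> f x < r0}"
    define yb where "yb = \<phi> (f x)"
    have yb0: "0 < yb" using classK_strict[OF K, of 0 "f x"] xU \<phi>0 by (simp add: yb_def)
    have ybK: "ereal yb < K_end \<phi> r0" using K_end_gt[OF K r0, of "f x"] xU by (simp add: yb_def)
    have Fx: "F x = {y. yb \<le> y}" using xU by (simp add: F_def yb_def)
    have "(x, yb) \<in> V" using xU yb0 ybK by (simp add: V_def)
    moreover have "yb \<in> F x" using Fx by simp
    ultimately have "metric_regular_at k F x yb" using I unfolding I_def metric_regular_on_def by blast
    then obtain \<epsilon>0 \<delta>0 where \<epsilon>0: "\<epsilon>0 > 0" and \<delta>0: "\<delta>0 > 0"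
      and mr: "\<And>x' y. x' \<in> ball x \<epsilon>0 \<Longrightarrow> y \<in> ball yb \<delta>0 \<Longrightarrow>
          edist_set x' {x''. y \<in> F x''} \<le> ereal k * edist_set y (F x')"
      unfolding metric_regular_at_def by blast
    show "strong_slope (\<phi> \<circ> f) x \<ge> ereal (1/k)"
    proof (rule slope_ge_from_points[OF k])
      fix \<delta> \<eta> :: real assume \<delta>: "\<delta> > 0" and \<eta>: "\<eta> > 0"
      define t where "t = min (\<delta>0/2) (\<delta> / (2 * k * (1 + \<eta>)))"
      have t: "t > 0" "t < \<delta>0" using \<delta>0 \<delta> \<eta> k by (auto simp: t_def)
      have tk: "k * t * (1 + \<eta>) < \<delta>"
      proof -
        have "t \<le> \<delta> / (2 * k * (1 + \<eta>))" by (simp add: t_def)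
        moreover have "2 * k * (1 + \<eta>) > 0" using k \<eta> by simp
        ultimately have "t * (2 * k * (1 + \<eta>)) \<le> \<delta>" by (simp add: pos_le_divide_eq)
        then have "k * t * (1 + \<eta>) \<le> \<delta> / 2" by (simp add: algebra_simps)
        then show ?thesis using \<delta> by simp
      qed
      define y where "y = yb - t"
      have yball: "y \<in> ball yb \<delta>0" using t by (simp add: y_def dist_real_def)
      have "edist_set y (F x) \<le> ereal (dist y yb)" using Fx by (intro edist_le_point) simp
      then have "edist_set y (F x) \<le> ereal t" using t by (simp add: y_def dist_real_def)
      then have "ereal k * edist_set y (F x) \<le> ereal k * ereal t"
        using k by (intro ereal_mult_left_mono) auto
      then have A: "edist_set x {x''. y \<in> F x''} \<le> ereal (k * t)"
        using mr[OF _ yball, of x] \<epsilon>0 by simp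
      have B: "ereal (k * t) < ereal (k * t * (1 + \<eta>))" using k t \<eta> by simp
      have "edist_set x {x''. y \<in> F x''} < ereal (k * t * (1 + \<eta>))"
        by (rule order_le_less_trans[OF A B])
      then obtain z where z: "y \<in> F z" "dist x z < k * t * (1 + \<eta>)" using edist_lt by blast
      have "\<phi> (f z) \<le> y" using z(1) by (simp add: F_def split: if_splits)
      then have "(\<phi> \<circ> f) x - (\<phi> \<circ> f) z \<ge> t" by (simp add: y_def yb_def)
      then show "\<exists>y D. D > 0 \<and> (\<phi> \<circ> f) x - (\<phi> \<circ> f) y \<ge> D \<and> dist x y < k*D*(1+\<eta>) \<and> dist x y < \<delta>"
        using z t tk by (intro exI[of _ z] exI[of _ t]) auto
    qed
  qed

  have III_I_pt: "metric_regular_at k F xb yb" if III: "III" and V: "(xb, yb) \<in> V" for xb yb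
  proof -
    have s1: "strong_slope (\<lambda>y. \<phi> (f y)) z \<ge> ereal (1/k)" if "0 < f z" "f z < r0" for z
      using III that gcomp unfolding III_def by auto
    have s2: "strong_slope (\<lambda>y. - \<phi> (f y)) z \<ge> ereal (1/k)" if "0 < f z" "f z < r0" for z
      using s1[OF that] negeq[OF that] by simp
    have xbU: "0 < f xb" "f xb < r0" and yb: "0 < yb" "ereal yb < K_end \<phi> r0" using V by (auto simp: V_def)
    have "open (f -` {0<..<r0})" using fc by (intro continuous_open_vimage) (auto simp: isCont_def continuous_at)
    moreover have "xb \<in> f -` {0<..<r0}" using xbU by simp
    ultimately obtain \<epsilon> where \<epsilon>: "\<epsilon> > 0" and \<epsilon>b: "ball xb \<epsilon> \<subseteq> f -` {0<..<r0}"
      using open_contains_ball by blast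
    obtain rr where rr: "0 < rr" "rr < r0" "yb < \<phi> rr" using K_end_lt[OF K r0 yb(2)] by blast
    define \<delta> where "\<delta> = min (yb/2) (\<phi> rr - yb)"
    have \<delta>: "\<delta> > 0" using yb rr by (simp add: \<delta>_def)
    show "metric_regular_at k F xb yb"
      unfolding metric_regular_at_def
    proof (rule exI[of _ \<epsilon>], rule conjI[OF \<epsilon>], rule exI[of _ \<delta>], rule conjI[OF \<delta>], intro ballI)
      fix x y assume x: "x \<in> ball xb \<epsilon>" and y: "y \<in> ball yb \<delta>"
      have xU: "0 < f x" "f x < r0" using x \<epsilon>b by auto
      have "\<bar>yb - y\<bar> < \<delta>" using y by (simp add: dist_real_def)
      then have h1: "\<bar>yb - y\<bar> < yb/2" and h2: "\<bar>yb - y\<bar> < \<phi> rr - yb" unfolding \<delta>_def by auto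
      have yr: "0 < y" "y < \<phi> rr" using h1 h2 yb by arith+
      have Fx: "F x = {y. \<phi> (f x) \<le> y}" using xU by (simp add: F_def)
      have "ereal k * 0 \<le> ereal k * edist_set y (F x)"
        by (rule ereal_mult_left_mono[OF edist_nonneg]) (use k in simp)
      then have rhs0: "0 \<le> ereal k * edist_set y (F x)" by simp
      show "edist_set x {x''. y \<in> F x''} \<le> ereal k * edist_set y (F x)"
      proof (cases "\<phi> (f x) \<le> y")
        case True
        then have "x \<in> {x''. y \<in> F x''}" using Fx by simp
        then have "edist_set x {x''. y \<in> F x''} \<le> ereal (dist x x)" by (rule edist_le_point)
        then have "edist_set x {x''. y \<in> F x''} \<le> 0" by (simp add: zero_ereal_def)
        then show ?thesis using rhs0 by (rule order_trans)
      next
        case False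
        then have yl: "y < \<phi> (f x)" by simp
        have "edist_set y (F x) \<ge> ereal (\<phi> (f x) - y)"
          unfolding edist_set_def Fx
          by (rule INF_greatest) (use yl in \<open>auto simp: dist_real_def\<close>)
        then have rhs: "ereal k * edist_set y (F x) \<ge> ereal (k * (\<phi> (f x) - y))"
          using k by (metis ereal_mult_left_mono less_imp_le times_ereal.simps(1) ereal_less_eq(5))
        obtain s where s: "0 \<le> s" "s \<le> f x" "\<phi> s = y"
          using IVT'[of \<phi> 0 y "f x"] \<phi>0 yr yl xU classK_cont[OF K, of 0 "f x"] by auto
        have s0: "0 < s" using s \<phi>0 yr by (cases "s = 0") auto
        have sx: "s < f x" using s yl by (cases "s = f x") auto
        have "edist_set x {x. f x = s} \<le> ereal (k * \<bar>\<phi> s - \<phi> (f x)\<bar>)"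
          by (rule one_sided[OF cu r0 k K s1 s2]) (use s0 sx xU in auto)
        moreover have "edist_set x {x''. y \<in> F x''} \<le> edist_set x {x. f x = s}"
          by (rule edist_mono) (use s s0 sx xU in \<open>auto simp: F_def\<close>)
        moreover have "\<bar>\<phi> s - \<phi> (f x)\<bar> = \<phi> (f x) - y" using s yl by simp
        ultimately show ?thesis using rhs by (metis order_trans)
      qed
    qed
  qed
  have III_I: "I" if III: "III"
    unfolding I_def metric_regular_on_def using III_I_pt[OF III] by auto
  have "(I \<longleftrightarrow> II) \<and> (II \<longleftrightarrow> III)" using III_II II_III I_III III_I by blast
  then show ?thesis unfolding I_def II_def III_def F_def V_def .
qed


end
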